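(* Let $n_1,n_2$ be nonnegative integers, and consider the walks of minimal length from $(0,0)$ to $(n_1,n_2)$ that stay in the first quadrant and use steps from $\{E,W,NE,SW\}$; let $s(n_1,n_2)$ be the number of such shortest walks. (i) If $n_1\ge n_2$, then every shortest walk uses only $E$ and $NE$ steps, the shortest length is $n_1$, and $F(n_1;\,n_1,n_2)=s(n_1,n_2)=\binom{n_1}{n_2}$. (ii) If $n_1\le n_2$, then every shortest walk uses only $W$ and $NE$ steps, the shortest length is $2n_2-n_1$, and $F(2n_2-n_1;\,n_1,n_2)=s(n_1,n_2)=\frac{n_1+1}{2n_2-n_1+1}\binom{2n_2-n_1+1}{n_2+1}$.
   Context: Steps are $E=(1,0)$, $W=(-1,0)$, $NE=(1,1)$, $SW=(-1,-1)$. $F(m;\,n_1,n_2)$ denotes the number of lattice walks from $(0,0)$ to $(n_1,n_2)$ that always stay in the first quadrant $\{(a,b): a\ge 0,\ b\ge 0\}$ and have exactly $m$ steps, each belonging to $\{E,W,NE,SW\}$. *)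

theory Defs
  imports Complex_Main
begin

datatype step = E | W | NE | SW

fun step_vec :: "step \<Rightarrow> int \<times> int" where
  "step_vec E = (1, 0)"
| "step_vec W = (-1, 0)"
| "step_vec NE = (1, 1)"
| "step_vec SW = (-1, -1)"

definition pos :: "step list \<Rightarrow> nat \<Rightarrow> int \<times> int" where
  "pos w k = (\<Sum>s\<leftarrow>take k w. fst (step_vec s), \<Sum>s\<leftarrow>take k w. snd (step_vec s))"

definition quadrant_walk :: "step list \<Rightarrow> nat \<Rightarrow> nat \<Rightarrow> bool" where
  "quadrant_walk w n1 n2 \<longleftrightarrow>
     (\<forall>k\<le>length w. fst (pos w k) \<ge> 0 \<and> snd (pos w k) \<ge> 0) \<and>
     pos w (length w) = (int n1, int n2)"

definition F :: "nat \<Rightarrow> nat \<Rightarrow> nat \<Rightarrow> nat" where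
  "F m n1 n2 = card {w. length w = m \<and> quadrant_walk w n1 n2}"

definition min_len :: "nat \<Rightarrow> nat \<Rightarrow> nat" where
  "min_len n1 n2 = (LEAST m. \<exists>w. length w = m \<and> quadrant_walk w n1 n2)"

definition s :: "nat \<Rightarrow> nat \<Rightarrow> nat" where
  "s n1 n2 = F (min_len n1 n2) n1 n2"

end

theory Submission
  imports Defs
begin

abbreviation cnt :: "step list \<Rightarrow> step \<Rightarrow> nat" where "cnt \<equiv> count_list"

lemma sumfst: "(\<Sum>s\<leftarrow>xs. fst (step_vec s)) = int (cnt xs E) - int (cnt xs W) + int (cnt xs NE) - int (cnt xs SW)"
proof (induction xs)
  case (Cons a xs) then show ?case by (cases a) auto
qed simp

lemma sumsnd: "(\<Sum>s\<leftarrow>xs. snd (step_vec s)) = int (cnt xs NE) - int (cnt xs SW)"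
proof (induction xs)
  case (Cons a xs) then show ?case by (cases a) auto
qed simp

lemma lencnt: "length xs = cnt xs E + cnt xs W + cnt xs NE + cnt xs SW"
proof (induction xs)
  case (Cons a xs) then show ?case by (cases a) auto
qed simp

lemma cnt_take: "cnt (take k w) x \<le> cnt w x"
proof -
  have "cnt w x = cnt (take k w) x + cnt (drop k w) x"
    by (metis append_take_drop_id count_list_append)
  then show ?thesis by simp
qed

lemma qw_iff: "quadrant_walk w n1 n2 \<longleftrightarrow>
   (\<forall>k\<le>length w. int (cnt (take k w) E) - int (cnt (take k w) W) + int (cnt (take k w) NE) - int (cnt (take k w) SW) \<ge> 0
       \<and> int (cnt (take k w) NE) - int (cnt (take k w) SW) \<ge> 0) \<and>
   int (cnt w E) - int (cnt w W) + int (cnt w NE) - int (cnt w SW) = int n1 \<and>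
   int (cnt w NE) - int (cnt w SW) = int n2"
  unfolding quadrant_walk_def pos_def sumfst sumsnd by simp

lemma lb:
  assumes "quadrant_walk w n1 n2"
  shows "length w \<ge> n1" "length w \<ge> 2*n2 - n1"
    "length w = n1 \<Longrightarrow> cnt w W = 0 \<and> cnt w SW = 0"
    "length w = 2*n2 - n1 \<Longrightarrow> n1 \<le> n2 \<Longrightarrow> cnt w E = 0 \<and> cnt w SW = 0"
proof -
  have f1: "int (cnt w E) - int (cnt w W) + int (cnt w NE) - int (cnt w SW) = int n1"
   and f2: "int (cnt w NE) - int (cnt w SW) = int n2" using assms unfolding qw_iff by blast+
  have l: "int (length w) = int (cnt w E) + int (cnt w W) + int (cnt w NE) + int (cnt w SW)"
    using lencnt[of w] by simp
  have "int n1 \<le> int (length w)" using f1 l by linarith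
  then show "length w \<ge> n1" by simp
  have "int (2*n2 - n1) \<le> int (length w)"
  proof (cases "n1 \<le> n2")
    case True
    then have "int (2*n2 - n1) = 2 * int n2 - int n1" by simp
    then show ?thesis using f1 f2 l by linarith
  next
    case False
    then have "2*n2 - n1 \<le> n1" by simp
    then show ?thesis using \<open>int n1 \<le> int (length w)\<close> by linarith
  qed
  then show "length w \<ge> 2*n2 - n1" by simp
  show "length w = n1 \<Longrightarrow> cnt w W = 0 \<and> cnt w SW = 0"
  proof -
    assume "length w = n1"
    then have "int (length w) = int n1" by simp
    then have "int (cnt w W) = 0 \<and> int (cnt w SW) = 0" using f1 l by linarith
    then show ?thesis by simp
  qed
  show "length w = 2*n2 - n1 \<Longrightarrow> n1 \<le> n2 \<Longrightarrow> cnt w E = 0 \<and> cnt w SW = 0"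
  proof -
    assume "length w = 2*n2 - n1" "n1 \<le> n2"
    then have "int (length w) = 2 * int n2 - int n1" by simp
    then have "int (cnt w E) = 0 \<and> int (cnt w SW) = 0" using f1 f2 l by linarith
    then show ?thesis by simp
  qed
qed

lemma set_sub: "(\<And>x. x \<notin> A \<Longrightarrow> cnt w x = 0) \<Longrightarrow> set w \<subseteq> A"
proof
  fix x assume a: "\<And>x. x \<notin> A \<Longrightarrow> cnt w x = 0" and "x \<in> set w"
  show "x \<in> A"
  proof (rule ccontr)
    assume "x \<notin> A"
    then have "cnt w x = 0" by (rule a)
    then show False using \<open>x \<in> set w\<close> count_list_0_iff[of w x] by simp
  qed
qed


definition B :: "nat \<Rightarrow> nat \<Rightarrow> step list set" where
  "B n k = {w. length w = n \<and> set w \<subseteq> {E,NE} \<and> cnt w NE = k}"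

lemma finB: "finite (B n k)"
proof -
  have "B n k \<subseteq> {w. set w \<subseteq> {E,NE} \<and> length w = n}" unfolding B_def by auto
  moreover have "finite {w. set w \<subseteq> {E,NE} \<and> length w = n}" by (rule finite_lists_length_eq) simp
  ultimately show ?thesis by (rule finite_subset)
qed

lemma B0: "B 0 k = (if k = 0 then {[]} else {})"
  unfolding B_def by auto

lemma BSuc0: "B (Suc n) 0 = (Cons E) ` B n 0"
  unfolding B_def by (auto simp: length_Suc_conv)

lemma BSuc: "B (Suc n) (Suc k) = (Cons NE) ` B n k \<union> (Cons E) ` B n (Suc k)"
  unfolding B_def by (auto simp: length_Suc_conv)

lemma cardB: "card (B n k) = n choose k"
proof (induction n arbitrary: k)
  case 0 then show ?case by (simp add: B0)
next
  case (Suc n)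
  show ?case
  proof (cases k)
    case 0 then show ?thesis using Suc by (simp add: BSuc0 card_image)
  next
    case (Suc j)
    have "card (B (Suc n) k) = card ((Cons NE) ` B n j) + card ((Cons E) ` B n (Suc j))"
      unfolding Suc BSuc by (rule card_Un_disjoint) (auto simp: finB)
    then show ?thesis using Suc.IH Suc by (simp add: card_image)
  qed
qed

lemma setA: "n2 \<le> n1 \<Longrightarrow> {w. length w = n1 \<and> quadrant_walk w n1 n2} = B n1 n2"
proof (intro set_eqI iffI)
  fix w assume h: "n2 \<le> n1" "w \<in> {w. length w = n1 \<and> quadrant_walk w n1 n2}"
  then have q: "quadrant_walk w n1 n2" "length w = n1" by auto
  from lb(3)[OF q] have z: "cnt w W = 0" "cnt w SW = 0" by auto
  have "set w \<subseteq> {E,NE}"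
  proof (rule set_sub)
    fix x :: step assume "x \<notin> {E,NE}" then show "cnt w x = 0" using z by (cases x) auto
  qed
  moreover have "cnt w NE = n2" using q z unfolding qw_iff by linarith
  ultimately show "w \<in> B n1 n2" using q unfolding B_def by auto
next
  fix w assume h: "n2 \<le> n1" "w \<in> B n1 n2"
  then have w: "length w = n1" "set w \<subseteq> {E,NE}" "cnt w NE = n2" unfolding B_def by auto
  have z: "cnt w W = 0" "cnt w SW = 0" using w(2) by (auto simp: count_list_0_iff)
  have zt: "cnt (take k w) W = 0" "cnt (take k w) SW = 0" for k
    using cnt_take[of k w W] cnt_take[of k w SW] z by auto
  have "cnt w E + cnt w NE = n1" using lencnt[of w] w z by simp
  then have "quadrant_walk w n1 n2" unfolding qw_iff using zt z w by simp
  then show "w \<in> {w. length w = n1 \<and> quadrant_walk w n1 n2}" using w by simp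
qed


definition good :: "step list \<Rightarrow> bool" where
  "good w \<longleftrightarrow> (\<forall>k\<le>length w. cnt (take k w) W \<le> cnt (take k w) NE)"

definition S :: "nat \<Rightarrow> nat \<Rightarrow> step list set" where
  "S p q = {w. length w = p + q \<and> set w \<subseteq> {W,NE} \<and> cnt w NE = p \<and> cnt w W = q \<and> good w}"

lemma good_snoc: "good (w @ [x]) \<longleftrightarrow> good w \<and> cnt (w @ [x]) W \<le> cnt (w @ [x]) NE"
proof -
  have t: "k \<le> length w \<Longrightarrow> take k (w @ [x]) = take k w" for k by simp
  have "good (w @ [x]) \<longleftrightarrow> (\<forall>k\<le>Suc (length w). cnt (take k (w@[x])) W \<le> cnt (take k (w@[x])) NE)"
    unfolding good_def by simp
  also have "\<dots> \<longleftrightarrow> (\<forall>k\<le>length w. cnt (take k (w@[x])) W \<le> cnt (take k (w@[x])) NE)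
      \<and> cnt (take (Suc (length w)) (w@[x])) W \<le> cnt (take (Suc (length w)) (w@[x])) NE"
    by (auto simp: le_Suc_eq)
  also have "\<dots> \<longleftrightarrow> good w \<and> cnt (w @ [x]) W \<le> cnt (w @ [x]) NE"
    unfolding good_def using t by auto
  finally show ?thesis .
qed

lemma finS: "finite (S p q)"
proof -
  have "S p q \<subseteq> {w. set w \<subseteq> {W,NE} \<and> length w = p + q}" unfolding S_def by auto
  moreover have "finite {w. set w \<subseteq> {W,NE} \<and> length w = p + q}" by (rule finite_lists_length_eq) simp
  ultimately show ?thesis by (rule finite_subset)
qed

lemma S_empty: "p < q \<Longrightarrow> S p q = {}"
proof -
  assume "p < q"
  { fix w assume "w \<in> S p q"
    then have "good w" "cnt w NE = p" "cnt w W = q" unfolding S_def by auto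
    then have "cnt (take (length w) w) W \<le> cnt (take (length w) w) NE" unfolding good_def by blast
    then have False using \<open>cnt w NE = p\<close> \<open>cnt w W = q\<close> \<open>p < q\<close> by simp }
  then show ?thesis by blast
qed

lemma cnt_rep: "cnt (replicate n x) y = (if x = y then n else 0)"
  by (induction n) auto

lemma S_0: "S p 0 = {replicate p NE}"
proof (intro set_eqI iffI)
  fix w assume "w \<in> S p 0"
  then have w: "length w = p" "set w \<subseteq> {W,NE}" "cnt w W = 0" unfolding S_def by auto
  have "set w \<subseteq> {NE}" using w(2,3) count_list_0_iff[of w W] by auto
  then have "replicate (length w) NE = w" by (intro replicate_length_same) auto
  then show "w \<in> {replicate p NE}" using w by simp
next
  fix w assume "w \<in> {replicate p NE}"
  then have w: "w = replicate p NE" by simp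
  have g: "good w" unfolding good_def w by (simp add: take_replicate)
  show "w \<in> S p 0" unfolding S_def using g w by (auto simp: cnt_rep)
qed

lemma S_step:
  assumes "q \<le> p"
  shows "S (Suc p) (Suc q) = (\<lambda>w. w @ [NE]) ` S p (Suc q) \<union> (\<lambda>w. w @ [W]) ` S (Suc p) q"
proof (intro set_eqI iffI)
  fix w assume "w \<in> S (Suc p) (Suc q)"
  then have w: "length w = Suc p + Suc q" "set w \<subseteq> {W,NE}" "cnt w NE = Suc p" "cnt w W = Suc q" "good w"
    unfolding S_def by auto
  then have "w \<noteq> []" by auto
  then obtain v x where vx: "w = v @ [x]" by (metis rev_exhaust)
  have x: "x = W \<or> x = NE" using w(2) vx by auto
  have gv: "good v" using w(5) vx good_snoc by blast
  show "w \<in> (\<lambda>w. w @ [NE]) ` S p (Suc q) \<union> (\<lambda>w. w @ [W]) ` S (Suc p) q"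
  proof (cases "x = NE")
    case True
    then have "v \<in> S p (Suc q)" using w vx gv unfolding S_def by auto
    then show ?thesis using vx True by blast
  next
    case False
    then have "x = W" using x by simp
    then have "v \<in> S (Suc p) q" using w vx gv unfolding S_def by auto
    then show ?thesis using vx \<open>x = W\<close> by blast
  qed
next
  fix w assume "w \<in> (\<lambda>w. w @ [NE]) ` S p (Suc q) \<union> (\<lambda>w. w @ [W]) ` S (Suc p) q"
  then show "w \<in> S (Suc p) (Suc q)"
  proof
    assume "w \<in> (\<lambda>w. w @ [NE]) ` S p (Suc q)"
    then obtain v where v: "w = v @ [NE]" "v \<in> S p (Suc q)" by blast
    then have "length v = p + Suc q" "set v \<subseteq> {W,NE}" "cnt v NE = p" "cnt v W = Suc q" "good v"
      unfolding S_def by auto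
    moreover have "good w" using v good_snoc assms calculation by simp
    ultimately show ?thesis using v unfolding S_def by simp
  next
    assume "w \<in> (\<lambda>w. w @ [W]) ` S (Suc p) q"
    then obtain v where v: "w = v @ [W]" "v \<in> S (Suc p) q" by blast
    then have "length v = Suc p + q" "set v \<subseteq> {W,NE}" "cnt v NE = Suc p" "cnt v W = q" "good v"
      unfolding S_def by auto
    moreover have "good w" using v good_snoc assms calculation by simp
    ultimately show ?thesis using v unfolding S_def by simp
  qed
qed

lemma arith_id:
  fixes p q X Y :: real
  assumes "(q+1)*Y = (p+1)*X" "p \<ge> 0"
  shows "(p-q)/(p+1)*Y + (p+2-q)/(p+2)*X = (p+1-q)/(p+2)*(X+Y)"
proof -
  have h: "(p-q)*(p+2)*Y + (p+2-q)*(p+1)*X = (p+1-q)*(p+1)*(X+Y)" using assms(1) by algebra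
  have "p + 1 \<noteq> 0" "p + 2 \<noteq> 0" using assms(2) by auto
  then have nz: "p + 1 \<noteq> 0" "p + 2 \<noteq> 0" by auto
  have "(p-q)/(p+1)*Y + (p+2-q)/(p+2)*X = ((p-q)*(p+2)*Y + (p+2-q)*(p+1)*X)/((p+1)*(p+2))"
    using nz by (simp add: field_simps)
  also have "\<dots> = ((p+1-q)*(p+1)*(X+Y))/((p+1)*(p+2))" using h by simp
  also have "\<dots> = ((p+1)*((p+1-q)*(X+Y)))/((p+1)*(p+2))" by (simp add: ac_simps)
  also have "\<dots> = ((p+1-q)*(X+Y))/(p+2)" using nz(1) by (rule mult_divide_mult_cancel_left)
  also have "\<dots> = (p+1-q)/(p+2)*(X+Y)" by simp
  finally show ?thesis .
qed


lemma cardS: "q \<le> p + 1 \<Longrightarrow> real (card (S p q)) = (real p + 1 - real q) / (real p + 1) * real ((p + q) choose q)"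
proof (induction p arbitrary: q)
  case 0
  then have "q = 0 \<or> q = 1" by auto
  then show ?case
  proof
    assume "q = 0" then show ?thesis by (simp add: S_0)
  next
    assume "q = 1" then show ?thesis by (simp add: S_empty)
  qed
next
  case (Suc p)
  note outer = Suc.IH
  show ?case using Suc.prems
  proof (induction q)
    case 0 then show ?case by (simp add: S_0)
  next
    case (Suc q)
    show ?case
    proof (cases "q \<le> p")
      case False
      then have "Suc q = Suc p + 1" using Suc.prems by simp
      then show ?thesis using S_empty[of "Suc p" "Suc q"] by simp
    next
      case True
      have c: "card (S (Suc p) (Suc q)) = card ((\<lambda>w. w @ [NE]) ` S p (Suc q)) + card ((\<lambda>w. w @ [W]) ` S (Suc p) q)"
        unfolding S_step[OF True] by (rule card_Un_disjoint) (auto simp: finS)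
      have c2: "card (S (Suc p) (Suc q)) = card (S p (Suc q)) + card (S (Suc p) q)"
        using c by (simp add: card_image inj_on_def)
      have i1: "real (card (S p (Suc q))) = (real p - real q) / (real p + 1) * real ((p + Suc q) choose Suc q)"
        using outer[of "Suc q"] True by simp
      have i2: "real (card (S (Suc p) q)) = (real p + 2 - real q) / (real p + 2) * real ((Suc p + q) choose q)"
        using Suc.IH True by (simp add: add_ac)
      define N where "N = p + q + 1"
      have e1: "p + Suc q = N" "Suc p + q = N" "Suc p + Suc q = Suc N" unfolding N_def by auto
      have rel: "Suc q * (N choose Suc q) = Suc p * (N choose q)"
        using Suc_times_binomial_add[of q p] unfolding N_def by (simp add: add.commute)
      have rel': "(real q + 1) * real (N choose Suc q) = (real p + 1) * real (N choose q)"
        using arg_cong[OF rel, of real] by (simp add: algebra_simps)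
      have "real (card (S (Suc p) (Suc q))) =
          (real p - real q) / (real p + 1) * real (N choose Suc q) + (real p + 2 - real q) / (real p + 2) * real (N choose q)"
        using c2 i1[unfolded e1(1)] i2[unfolded e1(2)] by simp
      also have "\<dots> = (real p + 1 - real q) / (real p + 2) * (real (N choose q) + real (N choose Suc q))"
        by (rule arith_id[OF rel']) simp
      also have "\<dots> = (real (Suc p) + 1 - real (Suc q)) / (real (Suc p) + 1) * real ((Suc p + Suc q) choose Suc q)"
        using e1 by (simp add: add_ac)
      finally show ?thesis .
    qed
  qed
qed

lemma setS: "n1 \<le> n2 \<Longrightarrow> {w. length w = 2*n2 - n1 \<and> quadrant_walk w n1 n2} = S n2 (n2 - n1)"
proof (intro set_eqI iffI)
  fix w assume h: "n1 \<le> n2" "w \<in> {w. length w = 2*n2 - n1 \<and> quadrant_walk w n1 n2}"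
  then have q: "quadrant_walk w n1 n2" "length w = 2*n2 - n1" by auto
  from lb(4)[OF q h(1)] have z: "cnt w E = 0" "cnt w SW = 0" by auto
  have st: "set w \<subseteq> {W,NE}"
  proof (rule set_sub)
    fix x :: step assume "x \<notin> {W,NE}" then show "cnt w x = 0" using z by (cases x) auto
  qed
  have f: "int (cnt w E) - int (cnt w W) + int (cnt w NE) - int (cnt w SW) = int n1"
     "int (cnt w NE) - int (cnt w SW) = int n2" using q(1) unfolding qw_iff by blast+
  have c1: "cnt w NE = n2" using f(2) z by simp
  have c2: "cnt w W = n2 - n1" using f z c1 h(1) by linarith
  have zt: "cnt (take k w) E = 0" "cnt (take k w) SW = 0" for k
    using cnt_take[of k w E] cnt_take[of k w SW] z by auto
  have g: "good w" unfolding good_def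
  proof (intro allI impI)
    fix k assume "k \<le> length w"
    then have "int (cnt (take k w) E) - int (cnt (take k w) W) + int (cnt (take k w) NE) - int (cnt (take k w) SW) \<ge> 0"
      using q(1) unfolding qw_iff by blast
    then show "cnt (take k w) W \<le> cnt (take k w) NE" using zt[of k] by simp
  qed
  have "length w = n2 + (n2 - n1)" using q(2) h(1) by simp
  then show "w \<in> S n2 (n2 - n1)" unfolding S_def using st c1 c2 g by simp
next
  fix w assume h: "n1 \<le> n2" "w \<in> S n2 (n2 - n1)"
  then have w: "length w = n2 + (n2 - n1)" "set w \<subseteq> {W,NE}" "cnt w NE = n2" "cnt w W = n2 - n1" "good w"
    unfolding S_def by auto
  have z: "cnt w E = 0" "cnt w SW = 0" using w(2) by (auto simp: count_list_0_iff)
  have zt: "cnt (take k w) E = 0" "cnt (take k w) SW = 0" for k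
    using cnt_take[of k w E] cnt_take[of k w SW] z by auto
  have a: "\<forall>k\<le>length w. int (cnt (take k w) E) - int (cnt (take k w) W) + int (cnt (take k w) NE) - int (cnt (take k w) SW) \<ge> 0
       \<and> int (cnt (take k w) NE) - int (cnt (take k w) SW) \<ge> 0"
    using w(5) zt unfolding good_def by simp
  have b: "int (cnt w E) - int (cnt w W) + int (cnt w NE) - int (cnt w SW) = int n1"
    using z w(3,4) h(1) by simp
  have c: "int (cnt w NE) - int (cnt w SW) = int n2" using z w(3) by simp
  have "quadrant_walk w n1 n2" unfolding qw_iff using a b c by blast
  moreover have "length w = 2*n2 - n1" using w(1) h(1) by simp
  ultimately show "w \<in> {w. length w = 2*n2 - n1 \<and> quadrant_walk w n1 n2}" by simp
qed


theorem theorem2: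
  fixes n1 n2 :: nat
  shows "(n1 \<ge> n2 \<longrightarrow>
            min_len n1 n2 = n1 \<and>
            (\<forall>w. quadrant_walk w n1 n2 \<and> length w = min_len n1 n2 \<longrightarrow> set w \<subseteq> {E, NE}) \<and>
            F n1 n1 n2 = s n1 n2 \<and> s n1 n2 = n1 choose n2)
       \<and> (n1 \<le> n2 \<longrightarrow>
            min_len n1 n2 = 2 * n2 - n1 \<and>
            (\<forall>w. quadrant_walk w n1 n2 \<and> length w = min_len n1 n2 \<longrightarrow> set w \<subseteq> {W, NE}) \<and>
            F (2 * n2 - n1) n1 n2 = s n1 n2 \<and>
            real (s n1 n2) = (real n1 + 1) / (real (2 * n2 - n1) + 1) * real ((2 * n2 - n1 + 1) choose (n2 + 1)))"
proof (intro conjI impI)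
  assume h: "n2 \<le> n1"
  have Fv: "F n1 n1 n2 = n1 choose n2" unfolding F_def setA[OF h] cardB ..
  then have "{w. length w = n1 \<and> quadrant_walk w n1 n2} \<noteq> {}"
    using zero_less_binomial[OF h] unfolding F_def by (metis card.empty less_irrefl)
  then obtain w0 where w0: "length w0 = n1" "quadrant_walk w0 n1 n2" by blast
  show ml: "min_len n1 n2 = n1" unfolding min_len_def
  proof (rule Least_equality)
    show "\<exists>w. length w = n1 \<and> quadrant_walk w n1 n2" using w0 by blast
  next
    fix y assume "\<exists>w. length w = y \<and> quadrant_walk w n1 n2"
    then show "n1 \<le> y" using lb(1) by blast
  qed
  show "\<forall>w. quadrant_walk w n1 n2 \<and> length w = min_len n1 n2 \<longrightarrow> set w \<subseteq> {E, NE}"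
  proof (intro allI impI)
    fix w assume a: "quadrant_walk w n1 n2 \<and> length w = min_len n1 n2"
    then have z: "cnt w W = 0" "cnt w SW = 0" using lb(3) ml by auto
    show "set w \<subseteq> {E, NE}"
    proof (rule set_sub)
      fix x :: step assume "x \<notin> {E,NE}" then show "cnt w x = 0" using z by (cases x) auto
    qed
  qed
  show "F n1 n1 n2 = s n1 n2" unfolding s_def ml ..
  then show "s n1 n2 = n1 choose n2" using Fv by simp
next
  assume h: "n1 \<le> n2"
  define N where "N = 2 * n2 - n1"
  have q: "n2 - n1 \<le> n2 + 1" by simp
  have Fv: "real (F N n1 n2) = (real n2 + 1 - real (n2 - n1)) / (real n2 + 1) * real ((n2 + (n2 - n1)) choose (n2 - n1))"
    unfolding F_def N_def setS[OF h] using cardS[OF q] .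
  have pos: "0 < (real n2 + 1 - real (n2 - n1)) / (real n2 + 1) * real ((n2 + (n2 - n1)) choose (n2 - n1))"
    using h by (simp add: of_nat_diff)
  then have "{w. length w = N \<and> quadrant_walk w n1 n2} \<noteq> {}"
    using Fv unfolding F_def by (metis card.empty of_nat_0 less_irrefl)
  then obtain w0 where w0: "length w0 = N" "quadrant_walk w0 n1 n2" by blast
  show ml: "min_len n1 n2 = 2 * n2 - n1" unfolding min_len_def
  proof (rule Least_equality)
    show "\<exists>w. length w = 2 * n2 - n1 \<and> quadrant_walk w n1 n2" using w0 N_def by blast
  next
    fix y assume "\<exists>w. length w = y \<and> quadrant_walk w n1 n2"
    then show "2 * n2 - n1 \<le> y" using lb(2) by blast
  qed
  show "\<forall>w. quadrant_walk w n1 n2 \<and> length w = min_len n1 n2 \<longrightarrow> set w \<subseteq> {W, NE}"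
  proof (intro allI impI)
    fix w assume a: "quadrant_walk w n1 n2 \<and> length w = min_len n1 n2"
    then have z: "cnt w E = 0" "cnt w SW = 0" using lb(4) ml h by auto
    show "set w \<subseteq> {W, NE}"
    proof (rule set_sub)
      fix x :: step assume "x \<notin> {W,NE}" then show "cnt w x = 0" using z by (cases x) auto
    qed
  qed
  show sF: "F (2 * n2 - n1) n1 n2 = s n1 n2" unfolding s_def ml ..
  have e: "n2 + (n2 - n1) = N" "real (n2 - n1) = real n2 - real n1" using h unfolding N_def by (auto simp: of_nat_diff)
  have sym: "N choose n2 = N choose (n2 - n1)"
    using binomial_symmetric[of n2 N] h unfolding N_def by simp
  have st: "Suc n2 * (Suc N choose Suc n2) = Suc N * (N choose n2)" by (rule Suc_times_binomial)
  have st': "(real n2 + 1) * real (Suc N choose Suc n2) = (real N + 1) * real (N choose (n2 - n1))"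
    using arg_cong[OF st, of real] sym by (simp add: algebra_simps)
  have "real (s n1 n2) = (real n1 + 1) / (real n2 + 1) * real (N choose (n2 - n1))"
    using Fv sF e unfolding N_def by simp
  also have "\<dots> = (real n1 + 1) / (real N + 1) * real (Suc N choose Suc n2)"
  proof -
    have "real (N choose (n2 - n1)) = (real n2 + 1) * real (Suc N choose Suc n2) / (real N + 1)"
      using st' by (simp add: field_simps)
    then show ?thesis by (simp add: field_simps)
  qed
  finally show "real (s n1 n2) = (real n1 + 1) / (real (2 * n2 - n1) + 1) * real ((2 * n2 - n1 + 1) choose (n2 + 1))"
    unfolding N_def by simp
qed

end
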